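(* Let $\mathcal{D}$ be a distribution supported on $(0,1]$ with mean $\mu$. Then for all $n,m$ and every preference profile $\sigma$, every alternative $j^*$ maximizing $\mathbb{E}[\mathrm{sw}(j,u)]$ over $j\in A$ satisfies $\mathbb{E}[\mathrm{sw}(j^*,u)]\ge n\mu$ and $\mathbb{E}[\mathrm{dist}(j^*,\sigma)]\ge\mu$.
   Context: There are $n$ voters and $m$ alternatives $A=\{1,\dots,m\}$. A preference profile $\sigma$ consists of a ranking of $A$ for each voter. Given $\mathcal{D}$ and $\sigma$, a random utility profile $u$ consistent with $\sigma$ is generated as follows: independently for each voter $i$, draw $m$ i.i.d. samples from $\mathcal{D}$ and assign them, from highest to lowest, to the alternatives in the order of voter $i$'s ranking. The social welfare of $j$ is $\mathrm{sw}(j,u)=\sum_i u_{ij}$, and $\mathrm{dist}(j,\sigma)=\mathrm{sw}(j,u)/\max_{k\in A}\mathrm{sw}(k,u)$; expectations are over $u$. *)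

theory Defs
  imports "HOL-Probability.Probability"
begin

text \<open>Voters are 0..n-1, alternatives are 0..m-1 (the paper's A = {1..m}, shifted).
  A sample point x assigns a real to every (voter, slot) pair; the samples of
  voter i are x (i,0), ..., x (i,m-1).\<close>

text \<open>A preference profile: for every voter i, sigma i k is the alternative
  that voter i ranks at position k (position 0 = top).\<close>
definition is_profile :: "nat \<Rightarrow> nat \<Rightarrow> (nat \<Rightarrow> nat \<Rightarrow> nat) \<Rightarrow> bool" where
  "is_profile n m \<sigma> = (\<forall>i<n. bij_betw (\<sigma> i) {..<m} {..<m})"

definition kth_largest :: "(nat \<Rightarrow> real) \<Rightarrow> nat \<Rightarrow> nat \<Rightarrow> real" where
  "kth_largest s m k = rev (sort (map s [0..<m])) ! k"

text \<open>Utility of alternative j for voter i: the samples of voter i, sorted from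
  highest to lowest, are assigned in the order of voter i's ranking.\<close>
definition util :: "nat \<Rightarrow> (nat \<Rightarrow> nat \<Rightarrow> nat) \<Rightarrow> (nat \<times> nat \<Rightarrow> real) \<Rightarrow> nat \<Rightarrow> nat \<Rightarrow> real" where
  "util m \<sigma> x i j = kth_largest (\<lambda>l. x (i, l)) m (inv_into {..<m} (\<sigma> i) j)"

definition sw :: "nat \<Rightarrow> nat \<Rightarrow> (nat \<Rightarrow> nat \<Rightarrow> nat) \<Rightarrow> (nat \<times> nat \<Rightarrow> real) \<Rightarrow> nat \<Rightarrow> real" where
  "sw n m \<sigma> x j = (\<Sum>i<n. util m \<sigma> x i j)"

definition distortion :: "nat \<Rightarrow> nat \<Rightarrow> (nat \<Rightarrow> nat \<Rightarrow> nat) \<Rightarrow> (nat \<times> nat \<Rightarrow> real) \<Rightarrow> nat \<Rightarrow> real" where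
  "distortion n m \<sigma> x j = sw n m \<sigma> x j / Max ((\<lambda>k. sw n m \<sigma> x k) ` {..<m})"

definition sample_space :: "real measure \<Rightarrow> nat \<Rightarrow> nat \<Rightarrow> (nat \<times> nat \<Rightarrow> real) measure" where
  "sample_space D n m = PiM ({..<n} \<times> {..<m}) (\<lambda>_. D)"

end

theory Submission
  imports Defs
begin

lemma insort_nth:
  fixes a :: real
  assumes "sorted xs" "xs \<noteq> []" "k \<le> length xs"
  shows "insort a xs ! k = (if k = 0 then min a (xs!0) else if k = length xs then max a (xs!(k-1))
           else max (xs!(k-1)) (min a (xs!k)))"
  using assms
proof (induction xs arbitrary: k)
  case Nil then show ?case by simp
next
  case (Cons x xs)
  show ?case
  proof (cases "a \<le> x")
    case True
    have "\<forall>y\<in>set (x#xs). a \<le> y" using True Cons.prems(1) by auto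
    then have all: "\<forall>i<length xs. a \<le> xs!i" by auto
    then show ?thesis using True Cons.prems
    proof (cases k)
      case (Suc k')
      have "k' > 0 \<Longrightarrow> a \<le> xs!(k'-1)" using all Suc Cons.prems(3) by simp
      then show ?thesis using True Cons.prems Suc
        by (auto simp: min_def max_def nth_Cons' split: if_splits)
    qed simp
  next
    case False
    show ?thesis
    proof (cases "xs = []")
      case True
      then show ?thesis using False Cons.prems by (cases k) (auto simp: min_def max_def)
    next
      case ne: False
      show ?thesis
      proof (cases k)
        case 0 then show ?thesis using False by simp
      next
        case (Suc k')
        have IH: "insort a xs ! k' = (if k' = 0 then min a (xs!0) else if k' = length xs then max a (xs!(k'-1))
           else max (xs!(k'-1)) (min a (xs!k')))"
          using Cons.IH[of k'] Cons.prems Suc ne by auto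
        have sx: "\<forall>y\<in>set xs. x \<le> y" using Cons.prems(1) by auto
        have "xs ! 0 \<in> set xs" using ne by simp
        then have "x \<le> xs!0" using sx by auto
        then show ?thesis using IH False Suc Cons.prems
          by (auto simp: min_def max_def)
      qed
    qed
  qed
qed


lemma sort_nth_measurable:
  fixes fs :: "('a \<Rightarrow> real) list"
  assumes "\<And>f. f \<in> set fs \<Longrightarrow> f \<in> borel_measurable M" "k < length fs"
  shows "(\<lambda>x. sort (map (\<lambda>f. f x) fs) ! k) \<in> borel_measurable M"
  using assms
proof (induction fs arbitrary: k)
  case Nil then show ?case by simp
next
  case (Cons g fs)
  show ?case
  proof (cases "fs = []")
    case True
    then show ?thesis using Cons.prems by simp
  next
    case False
    let ?S = "\<lambda>x. sort (map (\<lambda>f. f x) fs)"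
    have m: "(\<lambda>x. ?S x ! i) \<in> borel_measurable M" if "i < length fs" for i
      using Cons.IH[of i] Cons.prems that by auto
    have eq: "sort (map (\<lambda>f. f x) (g#fs)) ! k = (if k = 0 then min (g x) (?S x!0)
       else if k = length fs then max (g x) (?S x!(k-1)) else max (?S x!(k-1)) (min (g x) (?S x!k)))" for x
    proof -
      have ne: "?S x \<noteq> []" using False by (metis length_map length_sort length_0_conv)
      show ?thesis using insort_nth[OF sorted_sort ne, of k "g x"] Cons.prems by simp
    qed
    show ?thesis
    proof -
      have g: "g \<in> borel_measurable M" using Cons.prems by simp
      show ?thesis
        unfolding eq using False Cons.prems m g
        by (cases "k=0"; cases "k = length fs"; simp; intro borel_measurable_max borel_measurable_min; simp)
    qed
  qed
qed


lemma kth_eq: "k < m \<Longrightarrow> kth_largest s m k = sort (map s [0..<m]) ! (m - Suc k)"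
  unfolding kth_largest_def by (simp add: rev_nth)

lemma kth_measurable:
  assumes "k < m" "\<And>l. l < m \<Longrightarrow> s l \<in> borel_measurable M"
  shows "(\<lambda>x. kth_largest (\<lambda>l. s l x) m k) \<in> borel_measurable M"
proof -
  have "(\<lambda>x. sort (map (\<lambda>f. f x) (map s [0..<m])) ! (m - Suc k)) \<in> borel_measurable M"
    by (rule sort_nth_measurable) (use assms in auto)
  moreover have "map (\<lambda>f. f x) (map s [0..<m]) = map (\<lambda>l. s l x) [0..<m]" for x by simp
  ultimately show ?thesis using assms(1) by (simp add: kth_eq comp_def)
qed

lemma kth_in: "k < m \<Longrightarrow> kth_largest s m k \<in> s ` {..<m}"
proof -
  assume "k < m"
  then have "kth_largest s m k \<in> set (sort (map s [0..<m]))"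
    by (simp add: kth_eq del: set_sort)
  then show ?thesis by auto
qed

lemma kth_sum: "(\<Sum>k<m. kth_largest s m k) = (\<Sum>l<m. s l)"
proof -
  have "(\<Sum>k<m. kth_largest s m k) = (\<Sum>k<length (rev (sort (map s [0..<m]))). rev (sort (map s [0..<m])) ! k)"
    by (simp add: kth_largest_def)
  also have "\<dots> = sum_list (rev (sort (map s [0..<m])))"
    by (simp add: sum_list_sum_nth atLeast0LessThan)
  also have "\<dots> = sum_list (map s [0..<m])"
    by (metis mset_rev mset_sort sum_mset_sum_list)
  also have "\<dots> = (\<Sum>l<m. s l)" by (simp add: sum_list_sum_nth atLeast0LessThan)
  finally show ?thesis .
qed



theorem lemma5:
  fixes D :: "real measure" and n m :: nat and \<sigma> :: "nat \<Rightarrow> nat \<Rightarrow> nat" and jstar :: nat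
  assumes "prob_space D"
    and "sets D = sets borel"
    and "AE x in D. 0 < x \<and> x \<le> 1"
    and "n \<ge> 1"
    and "is_profile n m \<sigma>"
    and "jstar < m"
    and "\<forall>j<m. (\<integral>x. sw n m \<sigma> x j \<partial>sample_space D n m)
                 \<le> (\<integral>x. sw n m \<sigma> x jstar \<partial>sample_space D n m)"
  shows "(\<integral>x. sw n m \<sigma> x jstar \<partial>sample_space D n m) \<ge> real n * (\<integral>y. y \<partial>D)
       \<and> (\<integral>x. distortion n m \<sigma> x jstar \<partial>sample_space D n m) \<ge> (\<integral>y. y \<partial>D)"
proof -
  define I where "I = {..<n} \<times> {..<m}"
  define M where "M = sample_space D n m"
  define \<mu> where "\<mu> = (\<integral>y. y \<partial>D)"
  have M_def': "M = PiM I (\<lambda>_. D)" unfolding M_def I_def sample_space_def by simp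
  interpret P: prob_space M unfolding M_def' by (rule prob_space_PiM) (use assms(1) in auto)
  have finI: "finite I" unfolding I_def by simp
  have sD: "sets D = sets borel" by (rule assms(2))
  have meas_D: "measurable D = measurable borel" "measurable M D = measurable M borel"
    using measurable_cong_sets[OF sD refl] measurable_cong_sets[OF refl sD] by auto
  have comp: "(\<lambda>x. x p) \<in> borel_measurable M" if "p \<in> I" for p
    using measurable_component_singleton[OF that, of "\<lambda>_. D"]
    unfolding M_def' measurable_cong_sets[OF refl sD] .
  have AEgood: "AE x in M. \<forall>p\<in>I. 0 < x p \<and> x p \<le> 1"
    unfolding M_def' using finI
    by (intro eventually_ball_finite ballI AE_PiM_component) (use assms(1,3) in auto)
  have comp_int: "(\<integral>x. x p \<partial>M) = \<mu>" if "p \<in> I" for p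
  proof -
    have "distr M D (\<lambda>x. x p) = D" unfolding M_def'
      by (rule distr_PiM_component[OF assms(1) that])
    then have "(\<integral>y. y \<partial>D) = (\<integral>y. y \<partial>distr M D (\<lambda>x. x p))" by simp
    also have "\<dots> = (\<integral>x. x p \<partial>M)"
    proof (rule integral_distr)
      show "(\<lambda>x. x p) \<in> measurable M D" using comp[OF that] meas_D(2) by simp
      show "(\<lambda>y. y) \<in> borel_measurable D" by (rule measurable_ident_sets[OF sD])
    qed
    finally show ?thesis unfolding \<mu>_def by simp
  qed
  have bij: "bij_betw (inv_into {..<m} (\<sigma> i)) {..<m} {..<m}" if "i < n" for i
    using assms(5) that unfolding is_profile_def by (simp add: bij_betw_inv_into)
  have idx: "inv_into {..<m} (\<sigma> i) j < m" if "i < n" "j < m" for i j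
    using bij[OF that(1)] that(2) by (auto simp: bij_betw_def)
  have util_meas: "(\<lambda>x. util m \<sigma> x i j) \<in> borel_measurable M" if "i < n" "j < m" for i j
    unfolding util_def
    by (rule kth_measurable[OF idx[OF that]]) (use comp that in \<open>auto simp: I_def\<close>)
  have util_bd: "0 < util m \<sigma> x i j \<and> util m \<sigma> x i j \<le> 1"
    if H: "\<forall>p\<in>I. 0 < x p \<and> x p \<le> 1" "i < n" "j < m" for x i j
  proof -
    obtain l where "l < m" "util m \<sigma> x i j = x (i, l)"
      using kth_in[OF idx[OF H(2,3)], of "\<lambda>l. x (i, l)"] unfolding util_def by auto
    then show ?thesis using H by (auto simp: I_def)
  qed
  have sw_meas: "(\<lambda>x. sw n m \<sigma> x j) \<in> borel_measurable M" if "j < m" for j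
    unfolding sw_def using util_meas that by auto
  have sw_bd: "0 < sw n m \<sigma> x j \<and> sw n m \<sigma> x j \<le> real n"
    if "\<forall>p\<in>I. 0 < x p \<and> x p \<le> 1" "j < m" for x j
  proof -
    have "0 < (\<Sum>i<n. util m \<sigma> x i j)"
      using util_bd[OF that(1) _ that(2)] assms(4) by (intro sum_pos) (auto simp: lessThan_empty_iff)
    moreover have "(\<Sum>i<n. util m \<sigma> x i j) \<le> (\<Sum>i<n. 1)"
      using util_bd[OF that(1) _ that(2)] by (intro sum_mono) auto
    ultimately show ?thesis unfolding sw_def by simp
  qed
  have sw_int: "integrable M (\<lambda>x. sw n m \<sigma> x j)" if "j < m" for j
  proof (rule P.integrable_const_bound[where B="real n"])
    show "AE x in M. norm (sw n m \<sigma> x j) \<le> real n"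
      using AEgood by eventually_elim (use sw_bd that in force)
  qed (rule sw_meas[OF that])
  have comp_intg: "integrable M (\<lambda>x. x p)" if "p \<in> I" for p
  proof (rule P.integrable_const_bound[where B=1])
    show "AE x in M. norm (x p) \<le> 1"
      using AEgood by eventually_elim (use that in force)
  qed (rule comp[OF that])
  have sum_eq: "(\<Sum>j<m. sw n m \<sigma> x j) = (\<Sum>i<n. \<Sum>l<m. x (i, l))" for x
  proof -
    have "(\<Sum>j<m. sw n m \<sigma> x j) = (\<Sum>i<n. \<Sum>j<m. util m \<sigma> x i j)"
      unfolding sw_def by (rule sum.swap)
    also have "\<dots> = (\<Sum>i<n. \<Sum>l<m. x (i, l))"
    proof (rule sum.cong[OF refl])
      fix i assume "i \<in> {..<n}"
      then have "(\<Sum>j<m. util m \<sigma> x i j) = (\<Sum>k<m. kth_largest (\<lambda>l. x (i, l)) m k)"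
        unfolding util_def using bij by (intro sum.reindex_bij_betw) auto
      then show "(\<Sum>j<m. util m \<sigma> x i j) = (\<Sum>l<m. x (i, l))" by (simp add: kth_sum)
    qed
    finally show ?thesis .
  qed
  have "(\<Sum>j<m. (\<integral>x. sw n m \<sigma> x j \<partial>M)) = (\<integral>x. (\<Sum>j<m. sw n m \<sigma> x j) \<partial>M)"
    using Bochner_Integration.integral_sum[where I="{..<m}" and M=M and f="\<lambda>j x. sw n m \<sigma> x j"] sw_int by simp
  also have "\<dots> = (\<integral>x. (\<Sum>i<n. \<Sum>l<m. x (i, l)) \<partial>M)" by (simp add: sum_eq)
  also have "\<dots> = (\<Sum>i<n. \<Sum>l<m. (\<integral>x. x (i, l) \<partial>M))"
  proof -
    have ci: "integrable M (\<lambda>x. x (i, l))" if "i < n" "l < m" for i l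
      using comp_intg that by (auto simp: I_def)
    have "(\<integral>x. (\<Sum>i<n. \<Sum>l<m. x (i, l)) \<partial>M) = (\<Sum>i<n. (\<integral>x. (\<Sum>l<m. x (i, l)) \<partial>M))"
      by (rule Bochner_Integration.integral_sum) (auto intro!: Bochner_Integration.integrable_sum ci)
    also have "\<dots> = (\<Sum>i<n. \<Sum>l<m. (\<integral>x. x (i, l) \<partial>M))"
    proof (rule sum.cong[OF refl])
      fix i assume "i \<in> {..<n}"
      show "(\<integral>x. (\<Sum>l<m. x (i, l)) \<partial>M) = (\<Sum>l<m. (\<integral>x. x (i, l) \<partial>M))"
        by (rule Bochner_Integration.integral_sum) (use ci \<open>i \<in> {..<n}\<close> in auto)
    qed
    finally show ?thesis .
  qed
  also have "\<dots> = (\<Sum>i<n. \<Sum>l<m. \<mu>)"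
    using comp_int by (simp add: I_def)
  finally have tot: "(\<Sum>j<m. (\<integral>x. sw n m \<sigma> x j \<partial>M)) = real m * (real n * \<mu>)" by simp
  have "(\<Sum>j<m. (\<integral>x. sw n m \<sigma> x j \<partial>M)) \<le> (\<Sum>j<m. (\<integral>x. sw n m \<sigma> x jstar \<partial>M))"
    using assms(7) unfolding M_def by (intro sum_mono) auto
  then have "real m * (real n * \<mu>) \<le> real m * (\<integral>x. sw n m \<sigma> x jstar \<partial>M)"
    using tot by simp
  then have part1: "real n * \<mu> \<le> (\<integral>x. sw n m \<sigma> x jstar \<partial>M)"
    using assms(6) by simp
  define Mx where "Mx x = Max ((\<lambda>k. sw n m \<sigma> x k) ` {..<m})" for x
  have dist_eq: "distortion n m \<sigma> x jstar = sw n m \<sigma> x jstar / Mx x" for x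
    unfolding distortion_def Mx_def by simp
  have Mx_bd: "sw n m \<sigma> x jstar \<le> Mx x \<and> Mx x \<le> real n"
    if "\<forall>p\<in>I. 0 < x p \<and> x p \<le> 1" for x
  proof -
    have ne: "(\<lambda>k. sw n m \<sigma> x k) ` {..<m} \<noteq> {}" using assms(6) by auto
    have "sw n m \<sigma> x jstar \<le> Mx x" unfolding Mx_def using assms(6) by (intro Max_ge) auto
    moreover have "Mx x \<le> real n" unfolding Mx_def using ne sw_bd[OF that]
      by (subst Max_le_iff) auto
    ultimately show ?thesis by simp
  qed
  have dist_meas: "(\<lambda>x. distortion n m \<sigma> x jstar) \<in> borel_measurable M"
    unfolding dist_eq Mx_def using sw_meas assms(6)
    by (intro borel_measurable_divide borel_measurable_Max) auto
  have dist_int: "integrable M (\<lambda>x. distortion n m \<sigma> x jstar)"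
  proof (rule P.integrable_const_bound[where B=1])
    show "AE x in M. norm (distortion n m \<sigma> x jstar) \<le> 1"
      using AEgood
    proof eventually_elim
      case (elim x)
      have "0 < sw n m \<sigma> x jstar" using sw_bd[OF elim assms(6)] by simp
      then show ?case using Mx_bd[OF elim] unfolding dist_eq by simp
    qed
  qed (rule dist_meas)
  have "(\<integral>x. sw n m \<sigma> x jstar / real n \<partial>M) \<le> (\<integral>x. distortion n m \<sigma> x jstar \<partial>M)"
  proof (rule integral_mono_AE)
    show "integrable M (\<lambda>x. sw n m \<sigma> x jstar / real n)"
      using sw_int[OF assms(6)] by simp
    show "AE x in M. sw n m \<sigma> x jstar / real n \<le> distortion n m \<sigma> x jstar"
      using AEgood
    proof eventually_elim
      case (elim x)
      have p: "0 < sw n m \<sigma> x jstar" using sw_bd[OF elim assms(6)] by simp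
      have "0 < Mx x" using Mx_bd[OF elim] p by linarith
      then show ?case using Mx_bd[OF elim] p unfolding dist_eq
        by (intro divide_left_mono) auto
    qed
  qed (rule dist_int)
  then have part2: "\<mu> \<le> (\<integral>x. distortion n m \<sigma> x jstar \<partial>M)"
  proof -
    have "0 < real n" using assms(4) by simp
    then have "\<mu> \<le> (\<integral>x. sw n m \<sigma> x jstar \<partial>M) / real n"
      using part1 by (simp add: pos_le_divide_eq mult.commute)
    then show ?thesis using \<open>(\<integral>x. sw n m \<sigma> x jstar / real n \<partial>M) \<le> _\<close> by simp
  qed
  show ?thesis using part1 part2 unfolding M_def \<mu>_def by simp
qed

end
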